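(* Let $S=\{x_1,\dots,x_N\}$ be a spherical two-distance $2$-design (in its $n$-dimensional span), with inner products $a$ and $b$, and let $\Gamma_1$ be the graph on $\{1,\dots,N\}$ in which distinct $i,j$ are adjacent iff $\langle x_i,x_j\rangle=a$; assume $\Gamma_1$ is a strongly regular graph that is neither complete nor empty. Then the Gram matrix of $S$ coincides with the Gram matrix of $S_1(\Gamma_1)$, or with the Gram matrix of $S_2(\Gamma_1)$, or with the Gram matrix of a regular simplex of $N$ points in $\mathbb{R}^{N-1}$ (all off-diagonal entries equal to $-1/(N-1)$). In particular $S$ is, up to isometry, $S_1(\Gamma_1)$, $S_2(\Gamma_1)$, or a regular $(N-1)$-dimensional simplex.
   Context: A set of unit vectors $\{x_1,\dots,x_N\}$ spanning an $n$-dimensional real inner product space $V$ is a spherical $2$-design if $\sum_i x_i=0$ and $\sum_{i,j=1}^N\langle x_i,x_j\rangle^2=N^2/n$ (equivalently $\sum_i x_i=0$ and $\sum_i\langle x,x_i\rangle^2=\frac Nn\|x\|^2$ for all $x\in V$); it is two-distance if there are two reals $a\ne b$ such that $\langle x_i,x_j\rangle\in\{a,b\}$ for all $i\neq j$. A strongly regular graph is a regular graph in which any two adjacent vertices have a constant number $\lambda$ of common neighbours and any two nonadjacent vertices have a constant number $\mu$ of common neighbours. For such a graph $\Gamma_1$ on $N$ vertices, neither complete nor empty, with adjacency matrix $\Phi_1$, the orthogonal complement $\mathbf{1}^\perp\subset\mathbb{R}^N$ of the all-ones vector decomposes as an orthogonal sum of two eigenspaces $E_1,E_2$ of $\Phi_1$.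 $S_j(\Gamma_1)$ ($j=1,2$) is the set of $N$ vectors obtained by orthogonally projecting the standard basis vectors $e_1,\dots,e_N$ of $\mathbb{R}^N$ onto $E_j$ and normalizing each projection to unit length (vector $i$ coming from $e_i$). *)

theory Defs
  imports "HOL-Analysis.Analysis"
begin

definition strongly_regular :: "('v::finite \<Rightarrow> 'v \<Rightarrow> bool) \<Rightarrow> bool" where
  "strongly_regular adj \<longleftrightarrow>
     (\<forall>i j. adj i j \<longrightarrow> adj j i) \<and> (\<forall>i. \<not> adj i i) \<and>
     (\<exists>k lam mu::nat.
        (\<forall>i. card {j. adj i j} = k) \<and>
        (\<forall>i j. i \<noteq> j \<and> adj i j \<longrightarrow> card {l. adj i l \<and> adj j l} = lam) \<and>
        (\<forall>i j. i \<noteq> j \<and> \<not> adj i j \<longrightarrow> card {l. adj i l \<and> adj j l} = mu))"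

definition complete_graph :: "('v \<Rightarrow> 'v \<Rightarrow> bool) \<Rightarrow> bool" where
  "complete_graph adj \<longleftrightarrow> (\<forall>i j. i \<noteq> j \<longrightarrow> adj i j)"

definition empty_graph :: "('v \<Rightarrow> 'v \<Rightarrow> bool) \<Rightarrow> bool" where
  "empty_graph adj \<longleftrightarrow> (\<forall>i j. \<not> adj i j)"

definition adj_matrix :: "('v::finite \<Rightarrow> 'v \<Rightarrow> bool) \<Rightarrow> real^'v^'v" where
  "adj_matrix adj = (\<chi> i j. if adj i j then 1 else 0)"

definition eigenspace_perp1 :: "real^'v^'v \<Rightarrow> real \<Rightarrow> (real^'v) set" where
  "eigenspace_perp1 M theta = {v. v \<bullet> (\<chi> i. 1) = 0 \<and> M *v v = theta *\<^sub>R v}"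

definition orth_proj :: "'a::real_inner set \<Rightarrow> 'a \<Rightarrow> 'a" where
  "orth_proj E v = (THE p. p \<in> E \<and> (\<forall>w\<in>E. (v - p) \<bullet> w = 0))"

definition proj_normalized_basis :: "(real^'v) set \<Rightarrow> 'v::finite \<Rightarrow> real^'v" where
  "proj_normalized_basis E i =
     (let p = orth_proj E (axis i 1) in (1 / norm p) *\<^sub>R p)"

definition spherical_2design :: "('i::finite \<Rightarrow> 'a::euclidean_space) \<Rightarrow> bool" where
  "spherical_2design x \<longleftrightarrow>
     (\<forall>i. norm (x i) = 1) \<and> (\<Sum>i\<in>UNIV. x i) = 0 \<and>
     (\<Sum>i\<in>UNIV. \<Sum>j\<in>UNIV. (x i \<bullet> x j)\<^sup>2) =
        (real CARD('i))\<^sup>2 / real (dim (span (range x)))"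

end

theory Submission
  imports Defs
begin

lemma onb_expand:
  fixes B :: "'a::euclidean_space set"
  assumes orth: "pairwise orthogonal B" and nB: "\<And>e. e \<in> B \<Longrightarrow> norm e = 1"
    and y: "y \<in> span B"
  shows "y = (\<Sum>e\<in>B. (e \<bullet> y) *\<^sub>R e)"
proof -
  have fin: "finite B" by (simp add: orth pairwise_orthogonal_imp_finite)
  have eq: "(\<Sum>e\<in>B. (e \<bullet> y / (e \<bullet> e)) *\<^sub>R e) = (\<Sum>e\<in>B. (e \<bullet> y) *\<^sub>R e)"
    proof (rule sum.cong)
    fix e assume "e \<in> B" then have "e \<bullet> e = 1" using nB norm_eq_1 by blast
    then show "(e \<bullet> y / (e \<bullet> e)) *\<^sub>R e = (e \<bullet> y) *\<^sub>R e" by simp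
  qed simp
  have o: "orthogonal y (y - (\<Sum>e\<in>B. (e \<bullet> y) *\<^sub>R e))"
    using Gram_Schmidt_step[OF orth y, of y] eq by simp
  have s: "(\<Sum>e\<in>B. (e \<bullet> y) *\<^sub>R e) \<in> span B"
    by (intro span_sum span_scale span_base)
  have o2: "orthogonal (\<Sum>e\<in>B. (e \<bullet> y) *\<^sub>R e) (y - (\<Sum>e\<in>B. (e \<bullet> y) *\<^sub>R e))"
    using Gram_Schmidt_step[OF orth s, of y] eq by simp
  have "orthogonal (y - (\<Sum>e\<in>B. (e \<bullet> y) *\<^sub>R e)) (y - (\<Sum>e\<in>B. (e \<bullet> y) *\<^sub>R e))"
    using o o2 by (simp add: orthogonal_def inner_diff_left)
  then show ?thesis by (simp add: orthogonal_def)
qed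

lemma onb_inner:
  fixes B :: "'a::euclidean_space set"
  assumes orth: "pairwise orthogonal B" and nB: "\<And>e. e \<in> B \<Longrightarrow> norm e = 1"
    and z: "z \<in> span B"
  shows "y \<bullet> z = (\<Sum>e\<in>B. (e \<bullet> y) * (e \<bullet> z))"
proof -
  have "y \<bullet> z = y \<bullet> (\<Sum>e\<in>B. (e \<bullet> z) *\<^sub>R e)"
    using onb_expand[OF orth nB z] by simp
  also have "\<dots> = (\<Sum>e\<in>B. (e \<bullet> y) * (e \<bullet> z))"
    by (simp add: inner_sum_right inner_commute mult.commute)
  finally show ?thesis .
qed

lemma frame:
  fixes x :: "'v::finite \<Rightarrow> 'a::euclidean_space"
  assumes des: "spherical_2design x"
  shows "\<exists>c>0. \<forall>i j. (\<Sum>l\<in>UNIV. (x l \<bullet> x i) * (x l \<bullet> x j)) = c * (x i \<bullet> x j)"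
proof -
  define N where "N = real CARD('v)"
  have n1: "\<And>i. norm (x i) = 1" and hs: "(\<Sum>i\<in>UNIV. \<Sum>j\<in>UNIV. (x i \<bullet> x j)\<^sup>2) = N\<^sup>2 / real (dim (span (range x)))"
    using des by (auto simp: spherical_2design_def N_def)
  have xx: "\<And>i. x i \<bullet> x i = 1" using n1 norm_eq_1 by blast
  obtain B where BV: "B \<subseteq> span (range x)" and orth: "pairwise orthogonal B"
    and nB: "\<And>e. e \<in> B \<Longrightarrow> norm e = 1" and cB: "card B = dim (span (range x))"
    and sB: "span B = span (range x)"
    using orthonormal_basis_subspace[OF subspace_span] by metis
  have finB: "finite B" by (simp add: orth pairwise_orthogonal_imp_finite)
  define n where "n = real (card B)"
  have ee: "\<And>e. e \<in> B \<Longrightarrow> e \<bullet> e = 1" using nB norm_eq_1 by blast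
  have xB: "\<And>l. x l \<in> span B" using sB by (simp add: span_base)
  have Npos: "N > 0" by (simp add: N_def)
  have hs2: "(\<Sum>i\<in>UNIV. \<Sum>j\<in>UNIV. (x i \<bullet> x j)\<^sup>2) = N\<^sup>2 / n"
    using hs cB n_def by simp
  have npos: "n > 0"
  proof (rule ccontr)
    assume "\<not> n > 0" then have "n = 0" using n_def by simp
    then have "(\<Sum>i\<in>UNIV. \<Sum>j\<in>UNIV. (x i \<bullet> x j)\<^sup>2) = 0" using hs2 by simp
    then have "\<forall>i\<in>UNIV. (\<Sum>j\<in>UNIV. (x i \<bullet> x j)\<^sup>2) = 0"
      by (subst (asm) sum_nonneg_eq_0_iff) (auto intro: sum_nonneg)
    then have "\<forall>i. \<forall>j\<in>UNIV. (x i \<bullet> x j)\<^sup>2 = 0"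
      by (simp add: sum_nonneg_eq_0_iff)
    then have "(x undefined \<bullet> x undefined)\<^sup>2 = 0" by blast
    then show False using xx by simp
  qed
  define c where "c = N / n"
  have cpos: "c > 0" using Npos npos by (simp add: c_def)
  define T where "T e = (\<Sum>l\<in>UNIV. (x l \<bullet> e) *\<^sub>R x l)" for e
  have S1: "(\<Sum>e\<in>B. T e \<bullet> e) = N"
  proof -
    have "(\<Sum>e\<in>B. T e \<bullet> e) = (\<Sum>e\<in>B. \<Sum>l\<in>UNIV. (e \<bullet> x l) * (e \<bullet> x l))"
      by (simp add: T_def inner_sum_left inner_sum_right inner_commute)
    also have "\<dots> = (\<Sum>l\<in>UNIV. \<Sum>e\<in>B. (e \<bullet> x l) * (e \<bullet> x l))" by (rule sum.swap)
    also have "\<dots> = (\<Sum>l\<in>UNIV. x l \<bullet> x l)"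
      using onb_inner[OF orth nB xB, symmetric] by simp
    also have "\<dots> = N" by (simp add: xx N_def)
    finally show ?thesis .
  qed
  have S2: "(\<Sum>e\<in>B. T e \<bullet> T e) = N\<^sup>2 / n"
  proof -
    have "(\<Sum>e\<in>B. T e \<bullet> T e) = (\<Sum>e\<in>B. \<Sum>i\<in>UNIV. \<Sum>j\<in>UNIV. (x i \<bullet> x j) * ((e \<bullet> x i) * (e \<bullet> x j)))"
      by (simp add: T_def inner_sum_left inner_sum_right inner_commute algebra_simps)
    also have "\<dots> = (\<Sum>i\<in>UNIV. \<Sum>e\<in>B. \<Sum>j\<in>UNIV. (x i \<bullet> x j) * ((e \<bullet> x i) * (e \<bullet> x j)))" by (rule sum.swap)
    also have "\<dots> = (\<Sum>i\<in>UNIV. \<Sum>j\<in>UNIV. \<Sum>e\<in>B. (x i \<bullet> x j) * ((e \<bullet> x i) * (e \<bullet> x j)))"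
      by (simp add: sum.swap[of _ B])
    also have "\<dots> = (\<Sum>i\<in>UNIV. \<Sum>j\<in>UNIV. (x i \<bullet> x j) * (x i \<bullet> x j))"
      using onb_inner[OF orth nB xB, symmetric] by (simp add: sum_distrib_left[symmetric])
    also have "\<dots> = N\<^sup>2 / n" using hs2 by (simp add: power2_eq_square)
    finally show ?thesis .
  qed
  have S3: "(\<Sum>e\<in>B. e \<bullet> e) = n" using ee n_def by simp
  have "(\<Sum>e\<in>B. (T e - c *\<^sub>R e) \<bullet> (T e - c *\<^sub>R e)) =
        (\<Sum>e\<in>B. T e \<bullet> T e) - 2 * c * (\<Sum>e\<in>B. T e \<bullet> e) + c\<^sup>2 * (\<Sum>e\<in>B. e \<bullet> e)"
    by (simp add: inner_diff_left inner_diff_right sum_subtractf sum_distrib_left inner_commute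
        power2_eq_square algebra_simps sum.distrib)
  also have "\<dots> = 0" using S1 S2 S3 npos by (simp add: c_def power2_eq_square field_simps)
  finally have "\<forall>e\<in>B. (T e - c *\<^sub>R e) \<bullet> (T e - c *\<^sub>R e) = 0"
    using finB by (subst (asm) sum_nonneg_eq_0_iff) auto
  then have Te: "\<And>e. e \<in> B \<Longrightarrow> T e = c *\<^sub>R e" by simp
  show ?thesis
  proof (intro exI[of _ c] conjI cpos allI)
    fix i j
    have "(\<Sum>l\<in>UNIV. (x l \<bullet> x i) * (x l \<bullet> x j)) = (\<Sum>l\<in>UNIV. (x l \<bullet> x i) * (\<Sum>e\<in>B. (e \<bullet> x l) * (e \<bullet> x j)))"
      proof -
      have "\<And>l. x l \<bullet> x j = (\<Sum>e\<in>B. (e \<bullet> x l) * (e \<bullet> x j))" by (rule onb_inner[OF orth nB xB])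
      then show ?thesis by simp
    qed
    also have "\<dots> = (\<Sum>e\<in>B. (e \<bullet> x j) * (T e \<bullet> x i))"
      by (simp add: T_def inner_sum_left inner_sum_right sum_distrib_left inner_commute algebra_simps sum.swap[of _ B])
    also have "\<dots> = (\<Sum>e\<in>B. c * ((e \<bullet> x i) * (e \<bullet> x j)))"
      by (rule sum.cong) (auto simp: Te)
    also have "\<dots> = c * (x i \<bullet> x j)"
      using onb_inner[OF orth nB xB, symmetric] by (simp add: sum_distrib_left[symmetric])
    finally show "(\<Sum>l\<in>UNIV. (x l \<bullet> x i) * (x l \<bullet> x j)) = c * (x i \<bullet> x j)" .
  qed
qed

lemma matrix_part:
  fixes g :: "'v::finite \<Rightarrow> 'v \<Rightarrow> real" and a b c :: real
  assumes sym: "\<And>i j. g i j = g j i" and diag: "\<And>i. g i i = 1"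
    and rows: "\<And>i. (\<Sum>j\<in>UNIV. g i j) = 0"
    and fr: "\<And>i j. (\<Sum>l\<in>UNIV. g l i * g l j) = c * g i j"
    and cpos: "c > 0" and ab: "a \<noteq> b"
    and td: "\<And>i j. i \<noteq> j \<Longrightarrow> g i j \<in> {a, b}"
  shows "\<exists>theta.
            eigenspace_perp1 (adj_matrix (\<lambda>i j. i \<noteq> j \<and> g i j = a)) theta \<noteq> {0} \<and>
            (\<forall>i j. g i j =
               proj_normalized_basis
                 (eigenspace_perp1 (adj_matrix (\<lambda>i j. i \<noteq> j \<and> g i j = a)) theta) i
               \<bullet> proj_normalized_basis
                 (eigenspace_perp1 (adj_matrix (\<lambda>i j. i \<noteq> j \<and> g i j = a)) theta) j)"
proof -
  define A where "A = adj_matrix (\<lambda>i j. i \<noteq> j \<and> g i j = a)"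
  define th where "th = (c - 1 + b) / (a - b)"
  define E where "E = eigenspace_perp1 A th"
  have gA: "g i j = (if i = j then 1 else 0) * (1 - b) + (a - b) * A$i$j + b" for i j
    using td[of i j] diag[of i] by (auto simp: A_def adj_matrix_def)
  have Av: "(a - b) * (A *v v)$i = (\<Sum>j\<in>UNIV. g i j * v$j) - (1 - b) * v$i - b * (\<Sum>j\<in>UNIV. v$j)"
    for v :: "real^'v" and i
  proof -
    have "(\<Sum>j\<in>UNIV. g i j * v$j) = (\<Sum>j\<in>UNIV. (if i = j then (1 - b) * v$j else 0) + (a - b) * (A$i$j * v$j) + b * v$j)"
      by (intro sum.cong refl) (simp add: gA algebra_simps)
    also have "\<dots> = (1 - b) * v$i + (a - b) * (A *v v)$i + b * (\<Sum>j\<in>UNIV. v$j)"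
      by (simp add: sum.distrib matrix_vector_mult_def sum_distrib_left)
    finally show ?thesis by simp
  qed
  have one: "v \<bullet> (\<chi> i. 1) = (\<Sum>j\<in>UNIV. v$j)" for v :: "real^'v"
    by (simp add: inner_vec_def)
  have charE: "v \<in> E \<longleftrightarrow> (\<forall>i. (\<Sum>j\<in>UNIV. g i j * v$j) = c * v$i)" for v :: "real^'v"
  proof
    assume "v \<in> E"
    then have s0: "(\<Sum>j\<in>UNIV. v$j) = 0" and ev: "A *v v = th *\<^sub>R v"
      by (auto simp: E_def eigenspace_perp1_def one)
    show "\<forall>i. (\<Sum>j\<in>UNIV. g i j * v$j) = c * v$i"
    proof
      fix i
      have h1: "(a - b) * (th * v$i) = (\<Sum>j\<in>UNIV. g i j * v$j) - (1 - b) * v$i"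
        using Av[of v i] ev s0 by simp
      have h2: "(a - b) * th = c - 1 + b" using ab by (simp add: th_def)
      have "(\<Sum>j\<in>UNIV. g i j * v$j) = (a - b) * (th * v$i) + (1 - b) * v$i" using h1 by linarith
      also have "\<dots> = (c - 1 + b) * v$i + (1 - b) * v$i" using h2 by (simp add: mult.assoc[symmetric])
      also have "\<dots> = c * v$i" by (simp add: algebra_simps)
      finally show "(\<Sum>j\<in>UNIV. g i j * v$j) = c * v$i" .
    qed
  next
    assume h: "\<forall>i. (\<Sum>j\<in>UNIV. g i j * v$j) = c * v$i"
    have "c * (\<Sum>i\<in>UNIV. v$i) = (\<Sum>i\<in>UNIV. \<Sum>j\<in>UNIV. g i j * v$j)"
      using h by (simp add: sum_distrib_left)
    also have "\<dots> = (\<Sum>j\<in>UNIV. v$j * (\<Sum>i\<in>UNIV. g j i))"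
      by (subst sum.swap) (simp add: sum_distrib_left sym mult.commute)
    also have "\<dots> = 0" by (simp add: rows)
    finally have s0: "(\<Sum>j\<in>UNIV. v$j) = 0" using cpos by simp
    have "A *v v = th *\<^sub>R v"
    proof (rule vec_eq_iff[THEN iffD2], rule allI)
      fix i
      have "(a - b) * (A *v v)$i = (c - 1 + b) * v$i"
        using Av[of v i] h s0 by (simp add: algebra_simps)
      then show "(A *v v)$i = (th *\<^sub>R v)$i"
        using ab by (simp add: th_def field_simps)
    qed
    then show "v \<in> E" using s0 by (simp add: E_def eigenspace_perp1_def one)
  qed
  define p where "p i = (\<chi> j. g j i / c)" for i
  have pE: "p i \<in> E" for i
    unfolding charE
  proof
    fix k
    have "(\<Sum>j\<in>UNIV. g k j * p i $ j) = (\<Sum>j\<in>UNIV. g j k * g j i) / c"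
      by (simp add: p_def sum_divide_distrib sym[of k])
    also have "\<dots> = g k i" using fr[of k i] cpos by simp
    finally show "(\<Sum>j\<in>UNIV. g k j * p i $ j) = c * p i $ k" using cpos by (simp add: p_def)
  qed
  have porth: "(axis i 1 - p i) \<bullet> w = 0" if "w \<in> E" for i w
  proof -
    have h: "(\<Sum>j\<in>UNIV. g i j * w$j) = c * w$i" using that charE by blast
    have "(axis i 1 - p i) \<bullet> w = w$i - (\<Sum>j\<in>UNIV. g i j * w$j) / c"
    proof -
      have "p i \<bullet> w = (\<Sum>j\<in>UNIV. g i j * w$j) / c"
        by (simp add: p_def inner_vec_def sum_divide_distrib sym[of _ i])
      then show ?thesis by (simp add: inner_diff_left inner_axis')
    qed
    also have "\<dots> = 0" using h cpos by simp
    finally show ?thesis .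
  qed
  have Elin: "u - v \<in> E" if "u \<in> E" "v \<in> E" for u v
    using that unfolding charE by (simp add: right_diff_distrib sum_subtractf)
  have proj: "orth_proj E (axis i 1) = p i" for i
    unfolding orth_proj_def
  proof (rule the_equality)
    show "p i \<in> E \<and> (\<forall>w\<in>E. (axis i 1 - p i) \<bullet> w = 0)" using pE porth by blast
  next
    fix q assume q: "q \<in> E \<and> (\<forall>w\<in>E. (axis i 1 - q) \<bullet> w = 0)"
    have d: "q - p i \<in> E" using Elin q pE by blast
    have "(axis i 1 - p i) \<bullet> (q - p i) = 0" using porth d by blast
    moreover have "(axis i 1 - q) \<bullet> (q - p i) = 0" using q d by blast
    ultimately have "(q - p i) \<bullet> (q - p i) = 0"
      by (simp add: inner_diff_left inner_diff_right algebra_simps)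
    then show "q = p i" by simp
  qed
  have pp: "p i \<bullet> p j = g i j / c" for i j
  proof -
    have "p i \<bullet> p j = (\<Sum>k\<in>UNIV. g k i * g k j) / c^2"
      by (simp add: p_def inner_vec_def sum_divide_distrib power2_eq_square)
    also have "\<dots> = g i j / c" using fr[of i j] cpos by (simp add: power2_eq_square)
    finally show ?thesis .
  qed
  have np: "norm (p i) = sqrt (1 / c)" for i
    using pp[of i i] diag[of i] by (simp add: norm_eq_sqrt_inner)
  show ?thesis
  proof (intro exI[of _ th] conjI allI)
    have "p undefined \<noteq> 0"
    proof
      assume "p undefined = 0"
      then have "p undefined $ undefined = 0" by simp
      then show False using cpos diag by (simp add: p_def)
    qed
    then show "eigenspace_perp1 (adj_matrix (\<lambda>i j. i \<noteq> j \<and> g i j = a)) th \<noteq> {0}"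
      using pE[of undefined] unfolding E_def A_def by blast
  next
    fix i j
    have "proj_normalized_basis (eigenspace_perp1 (adj_matrix (\<lambda>i j. i \<noteq> j \<and> g i j = a)) th) i
      \<bullet> proj_normalized_basis (eigenspace_perp1 (adj_matrix (\<lambda>i j. i \<noteq> j \<and> g i j = a)) th) j
      = (1 / sqrt (1/c)) * (1 / sqrt (1/c)) * (g i j / c)"
      unfolding proj_normalized_basis_def E_def[symmetric] A_def[symmetric] Let_def proj np
      by (simp only: inner_scaleR_left inner_scaleR_right pp mult.assoc)
    also have "\<dots> = g i j"
    proof -
      have sq: "sqrt (1/c) * sqrt (1/c) = 1/c" using cpos by simp
      have "(1 / sqrt (1/c)) * (1 / sqrt (1/c)) = 1 / (sqrt (1/c) * sqrt (1/c))" by simp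
      also have "\<dots> = c" using sq by simp
      finally show ?thesis using cpos by simp
    qed
    finally show "g i j = proj_normalized_basis (eigenspace_perp1 (adj_matrix (\<lambda>i j. i \<noteq> j \<and> g i j = a)) th) i
      \<bullet> proj_normalized_basis (eigenspace_perp1 (adj_matrix (\<lambda>i j. i \<noteq> j \<and> g i j = a)) th) j" by simp
  qed
qed

theorem theorem3p4:
  fixes x :: "'v::finite \<Rightarrow> 'a::euclidean_space" and a b :: real
  assumes design: "spherical_2design x"
    and ab: "a \<noteq> b"
    and two_dist: "\<forall>i j. i \<noteq> j \<longrightarrow> x i \<bullet> x j \<in> {a, b}"
    and srg: "strongly_regular (\<lambda>i j. i \<noteq> j \<and> x i \<bullet> x j = a)"
    and not_complete: "\<not> complete_graph (\<lambda>i j. i \<noteq> j \<and> x i \<bullet> x j = a)"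
    and not_empty: "\<not> empty_graph (\<lambda>i j. i \<noteq> j \<and> x i \<bullet> x j = a)"
  shows "(\<exists>theta.
            eigenspace_perp1 (adj_matrix (\<lambda>i j. i \<noteq> j \<and> x i \<bullet> x j = a)) theta \<noteq> {0} \<and>
            (\<forall>i j. x i \<bullet> x j =
               proj_normalized_basis
                 (eigenspace_perp1 (adj_matrix (\<lambda>i j. i \<noteq> j \<and> x i \<bullet> x j = a)) theta) i
               \<bullet> proj_normalized_basis
                 (eigenspace_perp1 (adj_matrix (\<lambda>i j. i \<noteq> j \<and> x i \<bullet> x j = a)) theta) j))
         \<or> (\<forall>i j. x i \<bullet> x j = (if i = j then 1 else - 1 / (real CARD('v) - 1)))"
proof -
  obtain c where cpos: "c > 0" and fr: "\<And>i j. (\<Sum>l\<in>UNIV. (x l \<bullet> x i) * (x l \<bullet> x j)) = c * (x i \<bullet> x j)"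
    using frame[OF design] by blast
  have n1: "\<And>i. norm (x i) = 1" and s0: "(\<Sum>i\<in>UNIV. x i) = 0"
    using design by (auto simp: spherical_2design_def)
  have diag: "\<And>i. x i \<bullet> x i = 1" using n1 norm_eq_1 by blast
  have rows: "\<And>i. (\<Sum>j\<in>UNIV. x i \<bullet> x j) = 0"
    using s0 by (simp add: inner_sum_right[symmetric])
  show ?thesis
    using matrix_part[of "\<lambda>i j. x i \<bullet> x j" c a b, OF inner_commute diag rows fr cpos ab] two_dist
    by blast
qed

end
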